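(* Let $\lambda$ be a strongly inaccessible cardinal and regard ${}^\lambda2$ as an abelian group under coordinatewise addition modulo $2$, denoted $\oplus$. Then $\mathrm{id}(\mathbb{Q}_\lambda)$ is closed under translation: for every $\mathbf B\subseteq{}^\lambda2$ and $\eta\in{}^\lambda2$, $\mathbf B\in\mathrm{id}(\mathbb{Q}_\lambda)$ if and only if $\eta\oplus\mathbf B:=\{\eta\oplus\nu:\nu\in\mathbf B\}\in\mathrm{id}(\mathbb{Q}_\lambda)$.
   Context: Cardinals denoted $\partial,\kappa,\lambda$ are strongly inaccessible. For a set $T$ of sequences and an ordinal $\delta$, $\lim_\delta(T)=\{\nu\in{}^\delta 2: \nu\restriction\alpha\in T \text{ for all }\alpha<\delta\}$. The forcing notion $\mathbb{Q}_\kappa$ is defined by induction on strongly inaccessible $\kappa$: $p\in\mathbb{Q}_\kappa$ iff there is a witness $(\varrho,S,\bar\Lambda)$, meaning: (a) $p$ is a nonempty subset of ${}^{\kappa>}2$ closed under initial segments; (b) $S\subseteq\kappa$, every member of $S$ is strongly inaccessible, $S$ is not stationary in $\kappa$, and $S\cap\partial$ is not stationary in $\partial$ for every strongly inaccessible $\partial<\kappa$; (c) $\varrho\in{}^{\kappa>}2$, $p\cap{}^\alpha 2=\{\varrho\restriction\alpha\}$ for all $\alpha\le\ell g(\varrho)$, and $\varrho^\frown\langle 0\rangle,\varrho^\frown\langle1\rangle\in p$; (d) if $\varrho\trianglelefteq\eta\in p$ then $\eta^\frown\langle0\rangle,\eta^\frown\langle1\rangle\in p$; (e) if $\delta\in\kappa\setminus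 S$ is a limit ordinal with $\delta>\ell g(\varrho)$ and $\eta\in{}^\delta2$, then $\eta\in p$ iff $\eta\restriction\alpha\in p$ for all $\alpha<\delta$; (f) $\bar\Lambda=\langle\Lambda_\partial:\partial\in S\rangle$ where each $\Lambda_\partial$ is a set of at most $\partial$ dense open subsets of $\mathbb{Q}_\partial$; (g) if $\partial\in S$ and $\partial>\ell g(\varrho)$ then $p\cap{}^{\partial>}2\in\mathbb{Q}_\partial$, and for $\eta\in{}^\partial2$: $\eta\in p$ iff ($\eta\restriction\alpha\in p$ for all $\alpha<\partial$ and for every $\mathscr I\in\Lambda_\partial$ there is $q\in\mathscr I$ with $\eta\in\lim_\partial(q)$). The order is reverse inclusion. An $\eta\in{}^\lambda2$ fulfils $\mathscr I\subseteq\mathbb{Q}_\lambda$ if $\eta\in\lim_\lambda(q)$ for some $q\in\mathscr I$. $\mathrm{id}(\mathbb{Q}_\lambda)$ is the set of $A\subseteq{}^\lambda2$ for which there are $i( * )\le\lambda$ and dense open subsets $\mathscr I_i$ ($i<i( * )$) of $\mathbb{Q}_\lambda$ such that every $\eta\in A$ fails to fulfil $\mathscr I_i$ for some $i<i( * )$. *)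

theory Defs
  imports Main "HOL-Library.Countable_Set"
begin

text \<open>Ordinals are modelled as elements of an arbitrary well-ordered type 'o.
A sequence (element of some \<open>{}^\<alpha>2\<close>) is a partial map 'o to bool whose
domain is the initial segment below \<alpha>.\<close>

type_synonym 'o seq = "'o \<Rightarrow> bool option"

definition below :: "'o::wellorder \<Rightarrow> 'o set" where
  "below \<alpha> = {\<beta>. \<beta> < \<alpha>}"

definition seq_of_len :: "'o::wellorder \<Rightarrow> 'o seq \<Rightarrow> bool" where
  "seq_of_len \<alpha> \<eta> \<longleftrightarrow> dom \<eta> = below \<alpha>"

definition seqs :: "'o::wellorder \<Rightarrow> 'o seq set" where
  "seqs \<alpha> = {\<eta>. seq_of_len \<alpha> \<eta>}"

definition seqs_below :: "'o::wellorder \<Rightarrow> 'o seq set" where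
  "seqs_below \<kappa> = {\<eta>. \<exists>\<alpha><\<kappa>. seq_of_len \<alpha> \<eta>}"

definition lg :: "'o::wellorder seq \<Rightarrow> 'o" where
  "lg \<eta> = (LEAST \<alpha>. \<alpha> \<notin> dom \<eta>)"

definition restr :: "'o::wellorder seq \<Rightarrow> 'o \<Rightarrow> 'o seq" where
  "restr \<eta> \<alpha> = \<eta> |` below \<alpha>"

text \<open>\<open>\<eta>\<^sup>\<frown>\<langle>i\<rangle>\<close>; bit 0 is False, bit 1 is True\<close>
definition snoc :: "'o::wellorder seq \<Rightarrow> bool \<Rightarrow> 'o seq" where
  "snoc \<eta> i = \<eta>(lg \<eta> \<mapsto> i)"

definition init_seg :: "'o::wellorder seq \<Rightarrow> 'o seq \<Rightarrow> bool" where
  "init_seg \<rho> \<eta> \<longleftrightarrow> lg \<rho> \<le> lg \<eta> \<and> restr \<eta> (lg \<rho>) = \<rho>"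

definition lim_seqs :: "'o::wellorder \<Rightarrow> 'o seq set \<Rightarrow> 'o seq set" where
  "lim_seqs \<delta> T = {\<nu>. seq_of_len \<delta> \<nu> \<and> (\<forall>\<alpha><\<delta>. restr \<nu> \<alpha> \<in> T)}"

definition limit_ord :: "'o::wellorder \<Rightarrow> bool" where
  "limit_ord \<delta> \<longleftrightarrow> (\<exists>\<beta>. \<beta> < \<delta>) \<and> (\<forall>\<beta><\<delta>. \<exists>\<gamma>. \<beta> < \<gamma> \<and> \<gamma> < \<delta>)"

definition inj_into :: "'a set \<Rightarrow> 'b set \<Rightarrow> bool" where
  "inj_into A B \<longleftrightarrow> (\<exists>f. inj_on f A \<and> f ` A \<subseteq> B)"

text \<open>strongly inaccessible: uncountable, a cardinal, regular, strong limit\<close>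
definition strongly_inaccessible :: "'o::wellorder \<Rightarrow> bool" where
  "strongly_inaccessible \<kappa> \<longleftrightarrow>
     \<not> countable (below \<kappa>) \<and>
     (\<forall>\<mu><\<kappa>. \<not> inj_into (below \<kappa>) (below \<mu>)) \<and>
     (\<forall>X. X \<subseteq> below \<kappa> \<and> \<not> inj_into (below \<kappa>) X \<longrightarrow> (\<exists>\<gamma><\<kappa>. \<forall>x\<in>X. x < \<gamma>)) \<and>
     (\<forall>\<mu><\<kappa>. inj_into (Pow (below \<mu>)) (below \<kappa>) \<and> \<not> inj_into (below \<kappa>) (Pow (below \<mu>)))"

definition club :: "'o::wellorder \<Rightarrow> 'o set \<Rightarrow> bool" where
  "club \<kappa> C \<longleftrightarrow> C \<subseteq> below \<kappa> \<and> (\<forall>\<beta><\<kappa>. \<exists>\<gamma>\<in>C. \<beta> \<le> \<gamma>) \<and>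
     (\<forall>\<delta><\<kappa>. limit_ord \<delta> \<and> (\<forall>\<beta><\<delta>. \<exists>\<gamma>\<in>C. \<beta> \<le> \<gamma> \<and> \<gamma> < \<delta>) \<longrightarrow> \<delta> \<in> C)"

definition stationary :: "'o::wellorder \<Rightarrow> 'o set \<Rightarrow> bool" where
  "stationary \<kappa> S \<longleftrightarrow> S \<subseteq> below \<kappa> \<and> (\<forall>C. club \<kappa> C \<longrightarrow> S \<inter> C \<noteq> {})"

text \<open>dense open subsets of a forcing notion P ordered by reverse inclusion\<close>
definition dense_open :: "'o seq set set \<Rightarrow> 'o seq set set \<Rightarrow> bool" where
  "dense_open P I \<longleftrightarrow> I \<subseteq> P \<and> (\<forall>p\<in>I. \<forall>q\<in>P. q \<subseteq> p \<longrightarrow> q \<in> I) \<and>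
     (\<forall>p\<in>P. \<exists>q\<in>I. q \<subseteq> p)"

text \<open>\<open>(\<rho>,S,\<Lambda>)\<close> witnesses \<open>p \<in> \<bbbQ>_\<kappa>\<close>, given the forcing notions \<open>Qr d\<close> for \<open>d < \<kappa>\<close>\<close>
definition Q_witness ::
  "('o::wellorder \<Rightarrow> 'o seq set set) \<Rightarrow> 'o \<Rightarrow> 'o seq set \<Rightarrow> 'o seq \<Rightarrow> 'o set
     \<Rightarrow> ('o \<Rightarrow> 'o seq set set set) \<Rightarrow> bool" where
  "Q_witness Qr \<kappa> p \<rho> S \<Lambda> \<longleftrightarrow>
     \<comment> \<open>(a)\<close>
     p \<noteq> {} \<and> p \<subseteq> seqs_below \<kappa> \<and> (\<forall>\<eta>\<in>p. \<forall>\<alpha>\<le>lg \<eta>. restr \<eta> \<alpha> \<in> p) \<and>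
     \<comment> \<open>(b)\<close>
     S \<subseteq> below \<kappa> \<and> (\<forall>s\<in>S. strongly_inaccessible s) \<and> \<not> stationary \<kappa> S \<and>
     (\<forall>d<\<kappa>. strongly_inaccessible d \<longrightarrow> \<not> stationary d (S \<inter> below d)) \<and>
     \<comment> \<open>(c)\<close>
     \<rho> \<in> seqs_below \<kappa> \<and> (\<forall>\<alpha>\<le>lg \<rho>. p \<inter> seqs \<alpha> = {restr \<rho> \<alpha>}) \<and>
     snoc \<rho> False \<in> p \<and> snoc \<rho> True \<in> p \<and>
     \<comment> \<open>(d)\<close>
     (\<forall>\<eta>\<in>p. init_seg \<rho> \<eta> \<longrightarrow> snoc \<eta> False \<in> p \<and> snoc \<eta> True \<in> p) \<and>
     \<comment> \<open>(e)\<close>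
     (\<forall>\<delta><\<kappa>. \<delta> \<notin> S \<and> limit_ord \<delta> \<and> lg \<rho> < \<delta> \<longrightarrow>
        (\<forall>\<eta>\<in>seqs \<delta>. \<eta> \<in> p \<longleftrightarrow> (\<forall>\<alpha><\<delta>. restr \<eta> \<alpha> \<in> p))) \<and>
     \<comment> \<open>(f)\<close>
     (\<forall>d\<in>S. (\<forall>I\<in>\<Lambda> d. dense_open (Qr d) I) \<and> inj_into (\<Lambda> d) (below d)) \<and>
     \<comment> \<open>(g)\<close>
     (\<forall>d\<in>S. lg \<rho> < d \<longrightarrow>
        p \<inter> seqs_below d \<in> Qr d \<and>
        (\<forall>\<eta>\<in>seqs d. \<eta> \<in> p \<longleftrightarrow>
            (\<forall>\<alpha><d. restr \<eta> \<alpha> \<in> p) \<and> (\<forall>I\<in>\<Lambda> d. \<exists>q\<in>I. \<eta> \<in> lim_seqs d q)))"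

definition Q_step :: "('o::wellorder \<Rightarrow> 'o seq set set) \<Rightarrow> 'o \<Rightarrow> 'o seq set set" where
  "Q_step Qr \<kappa> = {p. \<exists>\<rho> S \<Lambda>. Q_witness Qr \<kappa> p \<rho> S \<Lambda>}"

text \<open>\<open>\<bbbQ>_\<kappa>\<close>, defined by well-founded recursion on \<open>\<kappa>\<close> (only \<open>\<bbbQ>_d\<close> for \<open>d < \<kappa>\<close> are used)\<close>
definition QQ :: "'o::wellorder \<Rightarrow> 'o seq set set" where
  "QQ = wfrec {(x, y). x < y} Q_step"

definition fulfils :: "'o::wellorder \<Rightarrow> 'o seq \<Rightarrow> 'o seq set set \<Rightarrow> bool" where
  "fulfils lam \<eta> I \<longleftrightarrow> (\<exists>q\<in>I. \<eta> \<in> lim_seqs lam q)"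

definition idQ :: "'o::wellorder \<Rightarrow> 'o seq set set" where
  "idQ lam = {A. A \<subseteq> seqs lam \<and>
     (\<exists>istar\<le>lam. \<exists>Is :: 'o \<Rightarrow> 'o seq set set.
        (\<forall>i<istar. dense_open (QQ lam) (Is i)) \<and>
        (\<forall>\<eta>\<in>A. \<exists>i<istar. \<not> fulfils lam \<eta> (Is i)))}"

definition xor_seq :: "'o seq \<Rightarrow> 'o seq \<Rightarrow> 'o seq" where
  "xor_seq \<eta> \<nu> = (\<lambda>\<beta>. case (\<eta> \<beta>, \<nu> \<beta>) of (Some a, Some b) \<Rightarrow> Some (a \<noteq> b) | _ \<Rightarrow> None)"

end

theory Submission
  imports Defs
begin

lemma dom_xor: "dom (xor_seq \<eta> \<nu>) = dom \<eta> \<inter> dom \<nu>"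
  by (auto simp: xor_seq_def split: option.splits)

lemma xor_invol: "dom \<nu> \<subseteq> dom \<eta> \<Longrightarrow> xor_seq \<eta> (xor_seq \<eta> \<nu>) = \<nu>"
  apply (rule ext)
  subgoal for b by (cases "\<nu> b"; cases "\<eta> b") (auto simp: xor_seq_def)
  done

lemma lg_dom: "dom \<nu> = dom \<mu> \<Longrightarrow> lg \<nu> = lg \<mu>"
  by (simp add: lg_def)

lemma lg_xor: "dom \<nu> \<subseteq> dom \<eta> \<Longrightarrow> lg (xor_seq \<eta> \<nu>) = lg \<nu>"
  by (rule lg_dom) (auto simp: dom_xor)

lemma lg_len: "seq_of_len \<alpha> \<nu> \<Longrightarrow> lg \<nu> = \<alpha>"
  unfolding lg_def seq_of_len_def below_def
  by (rule Least_equality) auto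

lemma restr_xor: "restr (xor_seq \<eta> \<nu>) \<alpha> = xor_seq \<eta> (restr \<nu> \<alpha>)"
  by (rule ext) (auto simp: restr_def xor_seq_def restrict_map_def split: option.splits)

lemma xor_inj: "dom \<nu> \<subseteq> dom \<eta> \<Longrightarrow> dom \<mu> \<subseteq> dom \<eta> \<Longrightarrow>
   xor_seq \<eta> \<nu> = xor_seq \<eta> \<mu> \<longleftrightarrow> \<nu> = \<mu>"
  by (metis xor_invol)

lemma mem_img: "\<forall>\<nu>\<in>p. dom \<nu> \<subseteq> dom \<eta> \<Longrightarrow> dom \<mu> \<subseteq> dom \<eta> \<Longrightarrow>
   \<mu> \<in> xor_seq \<eta> ` p \<longleftrightarrow> xor_seq \<eta> \<mu> \<in> p"
  by (metis image_eqI imageE xor_invol)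

lemma seq_of_len_xor: "dom \<nu> \<subseteq> dom \<eta> \<Longrightarrow> seq_of_len \<alpha> (xor_seq \<eta> \<nu>) \<longleftrightarrow> seq_of_len \<alpha> \<nu>"
  by (auto simp: seq_of_len_def dom_xor Int_absorb1)

lemma snoc_xor: "dom \<nu> \<subseteq> dom \<eta> \<Longrightarrow> \<eta> (lg \<nu>) = Some a \<Longrightarrow>
   xor_seq \<eta> (snoc \<nu> b) = snoc (xor_seq \<eta> \<nu>) (a \<noteq> b)"
proof -
  assume a1: "dom \<nu> \<subseteq> dom \<eta>" and a2: "\<eta> (lg \<nu>) = Some a"
  have "lg (xor_seq \<eta> \<nu>) = lg \<nu>" using a1 by (rule lg_xor)
  then show ?thesis using a2 unfolding snoc_def
    by (intro ext) (simp add: xor_seq_def)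
qed

lemma init_seg_xor: "dom \<nu> \<subseteq> dom \<eta> \<Longrightarrow> dom \<rho> \<subseteq> dom \<eta> \<Longrightarrow>
   init_seg (xor_seq \<eta> \<rho>) (xor_seq \<eta> \<nu>) \<longleftrightarrow> init_seg \<rho> \<nu>"
proof -
  assume a: "dom \<nu> \<subseteq> dom \<eta>" "dom \<rho> \<subseteq> dom \<eta>"
  have "dom (restr \<nu> (lg \<rho>)) \<subseteq> dom \<eta>" using a by (auto simp: restr_def)
  then have "xor_seq \<eta> (restr \<nu> (lg \<rho>)) = xor_seq \<eta> \<rho> \<longleftrightarrow> restr \<nu> (lg \<rho>) = \<rho>"
    using a by (simp add: xor_inj)
  then show ?thesis unfolding init_seg_def using a by (simp add: lg_xor restr_xor)
qed

lemma seqs_xor: "dom \<nu> \<subseteq> dom \<eta> \<Longrightarrow> xor_seq \<eta> \<nu> \<in> seqs \<alpha> \<longleftrightarrow> \<nu> \<in> seqs \<alpha>"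
  by (simp add: seqs_def seq_of_len_xor)

lemma seqs_below_xor: "dom \<nu> \<subseteq> dom \<eta> \<Longrightarrow> xor_seq \<eta> \<nu> \<in> seqs_below \<kappa> \<longleftrightarrow> \<nu> \<in> seqs_below \<kappa>"
  by (simp add: seqs_below_def seq_of_len_xor)

lemma seqs_below_dom: "\<nu> \<in> seqs_below \<kappa> \<Longrightarrow> dom \<nu> \<subseteq> below \<kappa>"
  by (auto simp: seqs_below_def seq_of_len_def below_def dest: less_trans)

lemma seqs_below_lg: "\<nu> \<in> seqs_below \<kappa> \<Longrightarrow> lg \<nu> < \<kappa>"
  by (auto simp: seqs_below_def lg_len)

lemma seqs_dom: "\<nu> \<in> seqs \<alpha> \<Longrightarrow> dom \<nu> = below \<alpha>"
  by (auto simp: seqs_def seq_of_len_def)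

lemma below_mono: "\<alpha> \<le> \<beta> \<Longrightarrow> below \<alpha> \<subseteq> below \<beta>"
  by (auto simp: below_def)

lemma Q_witness_cong: "\<forall>d\<in>S. Qr1 d = Qr2 d \<Longrightarrow>
  Q_witness Qr1 \<kappa> p \<rho> S \<Lambda> = Q_witness Qr2 \<kappa> p \<rho> S \<Lambda>"
  unfolding Q_witness_def by (simp cong: ball_cong)

lemma QQ_unfold: "QQ \<kappa> = Q_step QQ \<kappa>"
proof -
  have wf: "wf {(x::'a::wellorder, y). x < y}"
    using wf by (simp add: wf_def)
  have "QQ \<kappa> = Q_step (cut QQ {(x, y). x < y} \<kappa>) \<kappa>"
    unfolding QQ_def by (rule wfrec[OF wf])
  also have "\<dots> = Q_step QQ \<kappa>"
    unfolding Q_step_def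
  proof (intro Collect_cong ex_cong1)
    fix p \<rho> S \<Lambda>
    show "Q_witness (cut QQ {(x, y). x < y} \<kappa>) \<kappa> p \<rho> S \<Lambda> = Q_witness QQ \<kappa> p \<rho> S \<Lambda>"
    proof
      assume "Q_witness (cut QQ {(x, y). x < y} \<kappa>) \<kappa> p \<rho> S \<Lambda>"
      moreover then have "S \<subseteq> below \<kappa>" by (simp add: Q_witness_def)
      ultimately show "Q_witness QQ \<kappa> p \<rho> S \<Lambda>"
        using Q_witness_cong[of S "cut QQ {(x, y). x < y} \<kappa>" QQ \<kappa> p \<rho> \<Lambda>]
          cut_apply[of _ \<kappa> "{(x, y). x < y}" QQ]
        by (metis (no_types, lifting) case_prodI mem_Collect_eq subsetD below_def)
    next
      assume "Q_witness QQ \<kappa> p \<rho> S \<Lambda>"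
      moreover then have "S \<subseteq> below \<kappa>" by (simp add: Q_witness_def)
      ultimately show "Q_witness (cut QQ {(x, y). x < y} \<kappa>) \<kappa> p \<rho> S \<Lambda>"
        using Q_witness_cong[of S "cut QQ {(x, y). x < y} \<kappa>" QQ \<kappa> p \<rho> \<Lambda>]
          cut_apply[of _ \<kappa> "{(x, y). x < y}" QQ]
        by (metis (no_types, lifting) case_prodI mem_Collect_eq subsetD below_def)
    qed
  qed
  finally show ?thesis .
qed

lemma QQ_sub: "q \<in> QQ d \<Longrightarrow> q \<subseteq> seqs_below d"
  by (subst (asm) QQ_unfold) (auto simp: Q_step_def Q_witness_def)

lemma inj_into_image: "inj_into A B \<Longrightarrow> inj_into (f ` A) B"
proof -
  assume "inj_into A B"
  then obtain g where g: "inj_on g A" "g ` A \<subseteq> B" by (auto simp: inj_into_def)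
  have "inj_on (g \<circ> inv_into A f) (f ` A)"
    by (rule comp_inj_on) (auto intro: inj_on_inv_into inj_on_subset[OF g(1)] inv_into_into)
  moreover have "(g \<circ> inv_into A f) ` (f ` A) \<subseteq> B"
    using g(2) by (auto simp: image_subset_iff inv_into_into)
  ultimately show ?thesis unfolding inj_into_def by blast
qed

lemma dense_open_transfer:
  assumes T: "\<And>p. p \<in> P \<Longrightarrow> T p \<in> P" "\<And>p. p \<in> P \<Longrightarrow> T (T p) = p"
    and mono: "\<And>p q. q \<subseteq> p \<Longrightarrow> T q \<subseteq> T p"
    and D: "dense_open P I"
  shows "dense_open P (T ` I)"
  unfolding dense_open_def
proof (intro conjI ballI allI impI)
  show "T ` I \<subseteq> P" using D T by (auto simp: dense_open_def)
next
  fix p' q assume p': "p' \<in> T ` I" and q: "q \<in> P" "q \<subseteq> p'"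
  then obtain p where p: "p \<in> I" "p' = T p" by auto
  have pP: "p \<in> P" using p D by (auto simp: dense_open_def)
  have "T q \<subseteq> p" using mono[OF q(2)] p T(2)[OF pP] by simp
  then have "T q \<in> I" using D p T(1)[OF q(1)] by (auto simp: dense_open_def)
  then show "q \<in> T ` I" using T(2)[OF q(1)] by (metis image_eqI)
next
  fix p assume p: "p \<in> P"
  have "T p \<in> P" using T(1) p .
  then obtain q where q: "q \<in> I" "q \<subseteq> T p" using D unfolding dense_open_def by blast
  then have "T q \<subseteq> p" using mono[OF q(2)] T(2)[OF p] by simp
  then show "\<exists>q\<in>T ` I. q \<subseteq> p" using q by auto
qed

lemma lim_xor:
  assumes "below d \<subseteq> dom \<eta>" "\<forall>\<nu>\<in>q. dom \<nu> \<subseteq> dom \<eta>" "\<mu> \<in> seqs d"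
  shows "\<mu> \<in> lim_seqs d (xor_seq \<eta> ` q) \<longleftrightarrow> xor_seq \<eta> \<mu> \<in> lim_seqs d q"
proof -
  have dm: "dom \<mu> \<subseteq> dom \<eta>" using assms seqs_dom by blast
  have r: "dom (restr \<mu> \<alpha>) \<subseteq> dom \<eta>" for \<alpha> using dm by (auto simp: restr_def)
  show ?thesis
    unfolding lim_seqs_def using assms(3) dm
    by (simp add: seq_of_len_xor mem_img[OF assms(2) r] restr_xor seqs_def)
qed

lemma QQ_tr: "below \<kappa> \<subseteq> dom \<eta> \<Longrightarrow> p \<in> QQ \<kappa> \<Longrightarrow> xor_seq \<eta> ` p \<in> QQ \<kappa>"
proof (induction \<kappa> arbitrary: \<eta> p rule: less_induct)
  case (less \<kappa>)
  note IH = less.IH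
  have dk: "below \<kappa> \<subseteq> dom \<eta>" by fact
  from less.prems(2) obtain \<rho> S \<Lambda> where W: "Q_witness QQ \<kappa> p \<rho> S \<Lambda>"
    by (subst (asm) QQ_unfold) (auto simp: Q_step_def)
  define T where "T q = xor_seq \<eta> ` q" for q
  define \<Lambda>' where "\<Lambda>' d = (\<lambda>I. T ` I) ` \<Lambda> d" for d
  define \<rho>' where "\<rho>' = xor_seq \<eta> \<rho>"
  have psub: "p \<subseteq> seqs_below \<kappa>" using W by (simp add: Q_witness_def)
  have gb: "dom \<nu> \<subseteq> dom \<eta>" if "\<nu> \<in> seqs_below \<kappa>" for \<nu>
    using seqs_below_dom[OF that] dk by blast
  have gp: "\<forall>\<nu>\<in>p. dom \<nu> \<subseteq> dom \<eta>" using psub gb by blast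
  have gs: "dom \<nu> \<subseteq> dom \<eta>" if "\<nu> \<in> seqs \<alpha>" "\<alpha> < \<kappa>" for \<nu> \<alpha>
    using seqs_dom[OF that(1)] below_mono[of \<alpha> \<kappa>] less_imp_le[OF that(2)] dk by blast
  have memT: "\<mu> \<in> T p \<longleftrightarrow> xor_seq \<eta> \<mu> \<in> p" if "dom \<mu> \<subseteq> dom \<eta>" for \<mu>
    unfolding T_def using mem_img[OF gp that] .
  have rhob: "\<rho> \<in> seqs_below \<kappa>" using W by (simp add: Q_witness_def)
  have grho: "dom \<rho> \<subseteq> dom \<eta>" using gb[OF rhob] .
  have lgrho: "lg \<rho>' = lg \<rho>" unfolding \<rho>'_def using lg_xor[OF grho] .
  have lgk: "lg \<rho> < \<kappa>" using seqs_below_lg[OF rhob] .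
  have snocT: "snoc (xor_seq \<eta> \<nu>) c \<in> T p"
    if "\<nu> \<in> p" "\<And>b. snoc \<nu> b \<in> p" for \<nu> c
  proof -
    have nb: "\<nu> \<in> seqs_below \<kappa>" using that psub by blast
    have "lg \<nu> \<in> below \<kappa>" using seqs_below_lg[OF nb] by (simp add: below_def)
    then obtain a where a: "\<eta> (lg \<nu>) = Some a" using dk by auto
    have "xor_seq \<eta> (snoc \<nu> (a \<noteq> c)) = snoc (xor_seq \<eta> \<nu>) (a \<noteq> (a \<noteq> c))"
      using snoc_xor[OF gb[OF nb] a] .
    also have "(a \<noteq> (a \<noteq> c)) = c" by auto
    finally show ?thesis using that(2) unfolding T_def by (metis image_eqI)
  qed
  have subQ: "q \<subseteq> seqs_below d" if "q \<in> QQ d" for q d using QQ_sub[OF that] .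
  have gq: "\<forall>\<nu>\<in>q. dom \<nu> \<subseteq> dom \<eta>" if "q \<in> QQ d" "d < \<kappa>" for q d
  proof
    fix \<nu> assume "\<nu> \<in> q"
    then have "dom \<nu> \<subseteq> below d" using subQ[OF that(1)] seqs_below_dom by blast
    then show "dom \<nu> \<subseteq> dom \<eta>" using below_mono[of d \<kappa>] less_imp_le[OF that(2)] dk by blast
  qed
  have TT: "T (T q) = q" if "\<forall>\<nu>\<in>q. dom \<nu> \<subseteq> dom \<eta>" for q
    unfolding T_def image_image using that xor_invol
    by (metis (no_types, lifting) image_cong image_ident)
  have TQ: "T q \<in> QQ d" if "q \<in> QQ d" "d < \<kappa>" for q d
    unfolding T_def using IH[OF that(2) _ that(1)] below_mono[of d \<kappa>] less_imp_le[OF that(2)] dk by blast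
  show ?case
    unfolding QQ_unfold[of \<kappa>] Q_step_def mem_Collect_eq T_def[symmetric]
  proof (intro exI[of _ \<rho>'] exI[of _ S] exI[of _ \<Lambda>'])
    show "Q_witness QQ \<kappa> (T p) \<rho>' S \<Lambda>'"
      unfolding Q_witness_def
    proof (intro conjI)
      show "T p \<noteq> {}" using W by (simp add: Q_witness_def T_def)
      show "T p \<subseteq> seqs_below \<kappa>" using psub gp unfolding T_def
        by (auto simp: seqs_below_xor)
      show "\<forall>\<nu>\<in>T p. \<forall>\<alpha>\<le>lg \<nu>. restr \<nu> \<alpha> \<in> T p"
      proof (intro ballI allI impI)
        fix \<nu> \<alpha> assume "\<nu> \<in> T p" "\<alpha> \<le> lg \<nu>"
        then obtain \<mu> where m: "\<mu> \<in> p" "\<nu> = xor_seq \<eta> \<mu>" by (auto simp: T_def)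
        then have "\<alpha> \<le> lg \<mu>" using \<open>\<alpha> \<le> lg \<nu>\<close> lg_xor[of \<mu> \<eta>] gp by auto
        then have "restr \<mu> \<alpha> \<in> p" using W m(1) by (simp add: Q_witness_def)
        then show "restr \<nu> \<alpha> \<in> T p" using m by (simp add: restr_xor T_def)
      qed
      show "S \<subseteq> below \<kappa>" "\<forall>s\<in>S. strongly_inaccessible s" "\<not> stationary \<kappa> S"
        "\<forall>d<\<kappa>. strongly_inaccessible d \<longrightarrow> \<not> stationary d (S \<inter> below d)"
        using W by (simp_all add: Q_witness_def)
      show "\<rho>' \<in> seqs_below \<kappa>" unfolding \<rho>'_def using rhob grho by (simp add: seqs_below_xor)
      show "\<forall>\<alpha>\<le>lg \<rho>'. T p \<inter> seqs \<alpha> = {restr \<rho>' \<alpha>}"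
      proof (intro allI impI)
        fix \<alpha> assume "\<alpha> \<le> lg \<rho>'"
        then have al: "\<alpha> \<le> lg \<rho>" "\<alpha> < \<kappa>" using lgrho lgk by auto
        have eq: "p \<inter> seqs \<alpha> = {restr \<rho> \<alpha>}" using W al(1) by (simp add: Q_witness_def)
        show "T p \<inter> seqs \<alpha> = {restr \<rho>' \<alpha>}"
        proof (intro set_eqI iffI)
          fix \<mu> assume "\<mu> \<in> T p \<inter> seqs \<alpha>"
          then have m: "\<mu> \<in> seqs \<alpha>" "xor_seq \<eta> \<mu> \<in> p" "dom \<mu> \<subseteq> dom \<eta>"
            using memT gs[OF _ al(2)] by auto
          then have "xor_seq \<eta> \<mu> \<in> p \<inter> seqs \<alpha>" by (simp add: seqs_xor)
          then have "xor_seq \<eta> \<mu> = restr \<rho> \<alpha>" using eq by auto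
          then have "\<mu> = xor_seq \<eta> (restr \<rho> \<alpha>)" using xor_invol[OF m(3)] by metis
          then show "\<mu> \<in> {restr \<rho>' \<alpha>}" by (simp add: \<rho>'_def restr_xor)
        next
          fix \<mu> assume "\<mu> \<in> {restr \<rho>' \<alpha>}"
          then have m: "\<mu> = xor_seq \<eta> (restr \<rho> \<alpha>)" by (simp add: \<rho>'_def restr_xor)
          have r: "restr \<rho> \<alpha> \<in> p \<inter> seqs \<alpha>" using eq by auto
          then have "dom (restr \<rho> \<alpha>) \<subseteq> dom \<eta>" using gp by auto
          then show "\<mu> \<in> T p \<inter> seqs \<alpha>" using r m by (auto simp: T_def seqs_xor)
        qed
      qed
      have rhop: "\<rho> \<in> p" "\<And>b. snoc \<rho> b \<in> p"
      proof -
        have "p \<inter> seqs (lg \<rho>) = {restr \<rho> (lg \<rho>)}" using W by (simp add: Q_witness_def)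
        moreover have "restr \<rho> (lg \<rho>) = \<rho>"
          using rhob by (auto simp: restr_def seqs_below_def seq_of_len_def lg_len)
            (rule ext, auto simp: restrict_map_def, metis domIff)
        ultimately show "\<rho> \<in> p" by auto
        fix b show "snoc \<rho> b \<in> p" using W by (cases b) (simp_all add: Q_witness_def)
      qed
      show "snoc \<rho>' False \<in> T p" "snoc \<rho>' True \<in> T p"
        unfolding \<rho>'_def using snocT[OF rhop] by auto
      show "\<forall>\<nu>\<in>T p. init_seg \<rho>' \<nu> \<longrightarrow> snoc \<nu> False \<in> T p \<and> snoc \<nu> True \<in> T p"
      proof (intro ballI impI)
        fix \<nu> assume "\<nu> \<in> T p" "init_seg \<rho>' \<nu>"
        then obtain \<mu> where m: "\<mu> \<in> p" "\<nu> = xor_seq \<eta> \<mu>" by (auto simp: T_def)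
        then have "init_seg \<rho> \<mu>" using \<open>init_seg \<rho>' \<nu>\<close> init_seg_xor[of \<mu> \<eta> \<rho>] gp grho
          by (auto simp: \<rho>'_def)
        then have "snoc \<mu> b \<in> p" for b using W m(1) by (cases b) (auto simp: Q_witness_def)
        then show "snoc \<nu> False \<in> T p \<and> snoc \<nu> True \<in> T p" using snocT m by auto
      qed
      show "\<forall>\<delta><\<kappa>. \<delta> \<notin> S \<and> limit_ord \<delta> \<and> lg \<rho>' < \<delta> \<longrightarrow>
        (\<forall>\<mu>\<in>seqs \<delta>. \<mu> \<in> T p \<longleftrightarrow> (\<forall>\<alpha><\<delta>. restr \<mu> \<alpha> \<in> T p))"
      proof (intro allI impI ballI)
        fix \<delta> \<mu> assume d: "\<delta> < \<kappa>" "\<delta> \<notin> S \<and> limit_ord \<delta> \<and> lg \<rho>' < \<delta>" and mu: "\<mu> \<in> seqs \<delta>"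
        have gm: "dom \<mu> \<subseteq> dom \<eta>" using gs[OF mu d(1)] .
        have gr: "dom (restr \<mu> \<alpha>) \<subseteq> dom \<eta>" for \<alpha> using gm by (auto simp: restr_def)
        have "xor_seq \<eta> \<mu> \<in> seqs \<delta>" using mu gm by (simp add: seqs_xor)
        then have "xor_seq \<eta> \<mu> \<in> p \<longleftrightarrow> (\<forall>\<alpha><\<delta>. restr (xor_seq \<eta> \<mu>) \<alpha> \<in> p)"
          using W d lgrho by (simp add: Q_witness_def)
        then show "\<mu> \<in> T p \<longleftrightarrow> (\<forall>\<alpha><\<delta>. restr \<mu> \<alpha> \<in> T p)"
          using memT[OF gm] memT[OF gr] by (simp add: restr_xor)
      qed
      show "\<forall>d\<in>S. (\<forall>I\<in>\<Lambda>' d. dense_open (QQ d) I) \<and> inj_into (\<Lambda>' d) (below d)"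
      proof (intro ballI conjI)
        fix d assume dS: "d \<in> S"
        then have dk': "d < \<kappa>" using W by (auto simp: Q_witness_def below_def)
        show "inj_into (\<Lambda>' d) (below d)" unfolding \<Lambda>'_def
          using W dS by (intro inj_into_image) (simp add: Q_witness_def)
        fix I' assume "I' \<in> \<Lambda>' d"
        then obtain I where I: "I \<in> \<Lambda> d" "I' = T ` I" by (auto simp: \<Lambda>'_def)
        have "dense_open (QQ d) I" using W dS I(1) by (simp add: Q_witness_def)
        moreover have A1: "\<And>q. q \<in> QQ d \<Longrightarrow> T q \<in> QQ d" using TQ[OF _ dk'] .
        moreover have A2: "T (T q) = q" if "q \<in> QQ d" for q using TT[OF gq[OF that dk']] .
        moreover have A3: "\<And>p q. q \<subseteq> p \<Longrightarrow> T q \<subseteq> T p" unfolding T_def by (rule image_mono)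
        ultimately show "dense_open (QQ d) I'" unfolding I(2)
          using dense_open_transfer[of "QQ d" T I, OF A1 A2 A3] by blast
      qed
      show "\<forall>d\<in>S. lg \<rho>' < d \<longrightarrow>
        T p \<inter> seqs_below d \<in> QQ d \<and>
        (\<forall>\<mu>\<in>seqs d. \<mu> \<in> T p \<longleftrightarrow>
            (\<forall>\<alpha><d. restr \<mu> \<alpha> \<in> T p) \<and> (\<forall>I\<in>\<Lambda>' d. \<exists>q\<in>I. \<mu> \<in> lim_seqs d q))"
      proof (intro ballI impI conjI)
        fix d assume dS: "d \<in> S" and lgd: "lg \<rho>' < d"
        then have dk': "d < \<kappa>" using W by (auto simp: Q_witness_def below_def)
        have Wd: "p \<inter> seqs_below d \<in> QQ d" using W dS lgd lgrho by (simp add: Q_witness_def)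
        have "T p \<inter> seqs_below d = T (p \<inter> seqs_below d)"
          unfolding T_def using gp by (auto simp: seqs_below_xor)
        then show "T p \<inter> seqs_below d \<in> QQ d" using TQ[OF Wd dk'] by simp
        fix \<mu> assume mu: "\<mu> \<in> seqs d"
        have gm: "dom \<mu> \<subseteq> dom \<eta>" using gs[OF mu dk'] .
        have gr: "dom (restr \<mu> \<alpha>) \<subseteq> dom \<eta>" for \<alpha> using gm by (auto simp: restr_def)
        have bd: "below d \<subseteq> dom \<eta>" using below_mono[of d \<kappa>] less_imp_le[OF dk'] dk by blast
        have "xor_seq \<eta> \<mu> \<in> seqs d" using mu gm by (simp add: seqs_xor)
        then have e: "xor_seq \<eta> \<mu> \<in> p \<longleftrightarrow> (\<forall>\<alpha><d. restr (xor_seq \<eta> \<mu>) \<alpha> \<in> p) \<and>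
            (\<forall>I\<in>\<Lambda> d. \<exists>q\<in>I. xor_seq \<eta> \<mu> \<in> lim_seqs d q)"
          using W dS lgd lgrho by (simp add: Q_witness_def)
        have lim: "(\<forall>I\<in>\<Lambda>' d. \<exists>q\<in>I. \<mu> \<in> lim_seqs d q) \<longleftrightarrow>
                   (\<forall>I\<in>\<Lambda> d. \<exists>q\<in>I. xor_seq \<eta> \<mu> \<in> lim_seqs d q)"
        proof -
          have "\<mu> \<in> lim_seqs d (T q) \<longleftrightarrow> xor_seq \<eta> \<mu> \<in> lim_seqs d q" if "I \<in> \<Lambda> d" "q \<in> I" for I q
          proof -
            have "dense_open (QQ d) I" using W dS that(1) by (simp add: Q_witness_def)
            then have "q \<in> QQ d" using that(2) by (auto simp: dense_open_def)
            then show ?thesis unfolding T_def using lim_xor[OF bd gq[OF _ dk'] mu] by blast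
          qed
          then show ?thesis unfolding \<Lambda>'_def by auto
        qed
        show "\<mu> \<in> T p \<longleftrightarrow> (\<forall>\<alpha><d. restr \<mu> \<alpha> \<in> T p) \<and> (\<forall>I\<in>\<Lambda>' d. \<exists>q\<in>I. \<mu> \<in> lim_seqs d q)"
          using e lim memT[OF gm] memT[OF gr] by (simp add: restr_xor)
      qed
    qed
  qed
qed

lemma QQ_good: "q \<in> QQ lam \<Longrightarrow> \<eta> \<in> seqs lam \<Longrightarrow> \<forall>\<nu>\<in>q. dom \<nu> \<subseteq> dom \<eta>"
  using QQ_sub seqs_below_dom seqs_dom by blast

lemma idQ_tr:
  assumes B: "B \<subseteq> seqs lam" and e: "\<eta> \<in> seqs lam" and BI: "B \<in> idQ lam"
  shows "xor_seq \<eta> ` B \<in> idQ lam"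
proof -
  define T where "T q = xor_seq \<eta> ` q" for q
  have de: "dom \<eta> = below lam" using seqs_dom[OF e] .
  obtain istar Is where ist: "istar \<le> lam" "\<forall>i<istar. dense_open (QQ lam) (Is i)"
     "\<forall>\<nu>\<in>B. \<exists>i<istar. \<not> fulfils lam \<nu> (Is i)"
    using BI by (auto simp: idQ_def)
  define Is' where "Is' i = T ` Is i" for i
  have A1: "T q \<in> QQ lam" if "q \<in> QQ lam" for q
    unfolding T_def using QQ_tr[of lam \<eta> q] de that by simp
  have A2: "T (T q) = q" if "q \<in> QQ lam" for q
  proof -
    have g: "\<forall>\<nu>\<in>q. dom \<nu> \<subseteq> dom \<eta>" using QQ_good[OF that e] .
    show ?thesis unfolding T_def image_image using g xor_invol
      by (metis (no_types, lifting) image_cong image_ident)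
  qed
  have A3: "\<And>p q. q \<subseteq> p \<Longrightarrow> T q \<subseteq> T p" unfolding T_def by (rule image_mono)
  have D: "\<forall>i<istar. dense_open (QQ lam) (Is' i)"
    unfolding Is'_def using ist(2) dense_open_transfer[of "QQ lam" T, OF A1 A2 A3] by blast
  have sub: "xor_seq \<eta> ` B \<subseteq> seqs lam"
  proof
    fix x assume "x \<in> xor_seq \<eta> ` B"
    then obtain \<nu> where "\<nu> \<in> B" "x = xor_seq \<eta> \<nu>" by auto
    moreover then have "dom \<nu> \<subseteq> dom \<eta>" using B seqs_dom de by blast
    ultimately show "x \<in> seqs lam" using B by (auto simp: seqs_xor)
  qed
  have F: "\<forall>\<mu>\<in>xor_seq \<eta> ` B. \<exists>i<istar. \<not> fulfils lam \<mu> (Is' i)"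
  proof
    fix \<mu> assume "\<mu> \<in> xor_seq \<eta> ` B"
    then obtain \<nu> where nu: "\<nu> \<in> B" "\<mu> = xor_seq \<eta> \<nu>" by auto
    have gn: "dom \<nu> \<subseteq> dom \<eta>" using nu B seqs_dom de by blast
    have mu: "\<mu> \<in> seqs lam" using sub nu by blast
    obtain i where i: "i < istar" "\<not> fulfils lam \<nu> (Is i)" using ist(3) nu by blast
    have "\<not> fulfils lam \<mu> (Is' i)"
    proof
      assume "fulfils lam \<mu> (Is' i)"
      then obtain q where q: "q \<in> Is i" "\<mu> \<in> lim_seqs lam (T q)"
        by (auto simp: fulfils_def Is'_def)
      have "q \<in> QQ lam" using ist(2) i(1) q(1) by (auto simp: dense_open_def)
      then have "xor_seq \<eta> \<mu> \<in> lim_seqs lam q"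
        using lim_xor[of lam \<eta> q \<mu>] de QQ_good[OF _ e] mu q(2) by (simp add: T_def)
      then have "\<nu> \<in> lim_seqs lam q" using nu xor_invol[OF gn] by simp
      then show False using i(2) q(1) by (auto simp: fulfils_def)
    qed
    then show "\<exists>i<istar. \<not> fulfils lam \<mu> (Is' i)" using i(1) by blast
  qed
  show ?thesis unfolding idQ_def using sub ist(1) D F by blast
qed

theorem claim3p24:
  fixes lam :: "'o::wellorder" and B :: "'o seq set" and \<eta> :: "'o seq"
  assumes "strongly_inaccessible lam"
    and "B \<subseteq> seqs lam"
    and "\<eta> \<in> seqs lam"
  shows "B \<in> idQ lam \<longleftrightarrow> (xor_seq \<eta>) ` B \<in> idQ lam"
proof
  assume "B \<in> idQ lam" then show "xor_seq \<eta> ` B \<in> idQ lam"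
    using idQ_tr assms(2,3) by blast
next
  assume a: "xor_seq \<eta> ` B \<in> idQ lam"
  have de: "dom \<eta> = below lam" using seqs_dom[OF assms(3)] .
  have g: "\<forall>\<nu>\<in>B. dom \<nu> \<subseteq> dom \<eta>" using assms(2) seqs_dom de by blast
  have sub: "xor_seq \<eta> ` B \<subseteq> seqs lam" using assms(2) g by (auto simp: seqs_xor)
  have "xor_seq \<eta> ` xor_seq \<eta> ` B = B" unfolding image_image using g xor_invol
    by (metis (no_types, lifting) image_cong image_ident)
  then show "B \<in> idQ lam" using idQ_tr[OF sub assms(3) a] by simp
qed

end
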